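(* Let $(\Re, S, V)$ be a $V$-complete vector $S$-metric space, where $V$ is Archimedean. Let $K:\Re\to\Re$ be a map such that $K^2=K\circ K$ is continuous, and let $f:\Re\to\Re$ be a map commuting with $K$ (i.e. $fK=Kf$). Suppose: (i) $fK(\Re)\subseteq K^2(\Re)$; (ii) there is a constant $q\in[0,\tfrac13)$ such that for all $x,y\in\Re$, \[ S(fx,fx,fy)\preceq q\,U(x,x,y) \] for some \[ U(x,x,y)\in\Big\{S(Kx,Kx,Ky),\ S(Kx,Kx,fx),\ S(Ky,Ky,fy),\ \tfrac13\big[S(Kx,Kx,fy)+S(Ky,Ky,fx)\big]\Big\}; \] (iii) $K(\Re)$ or $f(\Re)$ is $V$-complete as a subspace of $\Re$. Then $K$ and $f$ have a unique common fixed point.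
   Context: A vector lattice (Riesz space) $V$ is a real vector space with a partial order $\preceq$ compatible with the linear structure ($p_1 \preceq p_2 \Rightarrow p_1+p_3 \preceq p_2+p_3$ and $\omega p_1 \preceq \omega p_2$ for real $\omega>0$) in which every two-element set has a supremum and an infimum. $V$ is Archimedean if $\inf\{\tfrac{1}{m}v : m \in \mathbb{N}\} = 0$ for every $v \in V^+=\{v\in V: v\succeq 0\}$. For a sequence $(\mu_n)$ in $V$, $\mu_n \downarrow 0$ means $(\mu_n)$ is decreasing with $\inf_n \mu_n = 0$. A vector $S$-metric on a nonempty set $\Re$ is a map $S:\Re\times\Re\times\Re\to V$ such that for all $x,y,z,a\in\Re$: (a) $S(x,y,z)\succeq 0$; (b) $S(x,y,z)=0$ iff $x=y=z$; (c) $S(x,y,z)\preceq S(x,y,a)+S(y,y,a)+S(z,z,a)$. The triple $(\Re,S,V)$ is a vector $S$-metric space. A sequence $(x_n)$ in $\Re$ $V$-converges to $x\in\Re$ (written $x_n \xrightarrow{S,V} x$) if there is a sequence $(\mu_n)$ in $V$ with $\mu_n\downarrow 0$ and $S(x_n,x_n,x)\preceq \mu_n$ for all $n$. It is $V$-Cauchy if there is $(\mu_n)$ in $V$ with $\mu_n\downarrow 0$ and $S(x_n,x_n,x_{n+q})\preceq\mu_n$ for all $n$ and all $q$. The space (or a subset of it) is $V$-complete if every $V$-Cauchy sequence in it $V$-converges to a limit in it. A map $T:\Re\to\Re$ is continuous if $x_n\xrightarrow{S,V}x$ implies $Tx_n\xrightarrow{S,V}Tx$. *)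

theory Defs
  imports Main "HOL-Analysis.Analysis"
begin

definition is_inf_of :: "'v::order set \<Rightarrow> 'v \<Rightarrow> bool" where
  "is_inf_of A a \<longleftrightarrow> (\<forall>x\<in>A. a \<le> x) \<and> (\<forall>b. (\<forall>x\<in>A. b \<le> x) \<longrightarrow> b \<le> a)"

definition archimedean_vl :: "'v::{ordered_real_vector, lattice} itself \<Rightarrow> bool" where
  "archimedean_vl _ \<longleftrightarrow>
     (\<forall>v::'v. 0 \<le> v \<longrightarrow> is_inf_of {(1 / real m) *\<^sub>R v | m::nat. m \<ge> 1} 0)"

definition decr_to_zero :: "(nat \<Rightarrow> 'v::{ordered_real_vector, lattice}) \<Rightarrow> bool" where
  "decr_to_zero \<mu> \<longleftrightarrow> (\<forall>n. \<mu> (Suc n) \<le> \<mu> n) \<and> is_inf_of (range \<mu>) 0"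

definition vector_S_metric :: "('a \<Rightarrow> 'a \<Rightarrow> 'a \<Rightarrow> 'v::{ordered_real_vector, lattice}) \<Rightarrow> bool" where
  "vector_S_metric S \<longleftrightarrow>
     (\<forall>x y z. 0 \<le> S x y z) \<and>
     (\<forall>x y z. S x y z = 0 \<longleftrightarrow> x = y \<and> y = z) \<and>
     (\<forall>x y z a. S x y z \<le> S x y a + S y y a + S z z a)"

definition V_conv :: "('a \<Rightarrow> 'a \<Rightarrow> 'a \<Rightarrow> 'v::{ordered_real_vector, lattice}) \<Rightarrow> (nat \<Rightarrow> 'a) \<Rightarrow> 'a \<Rightarrow> bool" where
  "V_conv S x l \<longleftrightarrow> (\<exists>\<mu>. decr_to_zero \<mu> \<and> (\<forall>n. S (x n) (x n) l \<le> \<mu> n))"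

definition V_Cauchy :: "('a \<Rightarrow> 'a \<Rightarrow> 'a \<Rightarrow> 'v::{ordered_real_vector, lattice}) \<Rightarrow> (nat \<Rightarrow> 'a) \<Rightarrow> bool" where
  "V_Cauchy S x \<longleftrightarrow> (\<exists>\<mu>. decr_to_zero \<mu> \<and> (\<forall>n q. S (x n) (x n) (x (n + q)) \<le> \<mu> n))"

definition V_complete_on :: "('a \<Rightarrow> 'a \<Rightarrow> 'a \<Rightarrow> 'v::{ordered_real_vector, lattice}) \<Rightarrow> 'a set \<Rightarrow> bool" where
  "V_complete_on S A \<longleftrightarrow>
     (\<forall>x. (\<forall>n. x n \<in> A) \<longrightarrow> V_Cauchy S x \<longrightarrow> (\<exists>l\<in>A. V_conv S x l))"

definition V_continuous :: "('a \<Rightarrow> 'a \<Rightarrow> 'a \<Rightarrow> 'v::{ordered_real_vector, lattice}) \<Rightarrow> ('a \<Rightarrow> 'a) \<Rightarrow> bool" where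
  "V_continuous S T \<longleftrightarrow> (\<forall>x l. V_conv S x l \<longrightarrow> V_conv S (\<lambda>n. T (x n)) (T l))"

end

theory Submission
  imports Defs
begin

lemma lin2:
  fixes a w :: "'v::ordered_real_vector"
  assumes "a \<le> s *\<^sub>R a + w"
  shows "(1 - s) *\<^sub>R a \<le> w"
proof -
  have "a - s *\<^sub>R a \<le> w" using assms by (simp add: algebra_simps)
  thus ?thesis by (simp add: algebra_simps)
qed

lemma lin3:
  fixes a w :: "'v::ordered_real_vector"
  assumes "c *\<^sub>R a \<le> w" "c > 0"
  shows "a \<le> (1/c) *\<^sub>R w"
proof -
  have "(1/c) *\<^sub>R (c *\<^sub>R a) \<le> (1/c) *\<^sub>R w" using assms by (intro scaleR_left_mono) auto
  thus ?thesis using assms by simp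
qed

lemma lin:
  fixes a b :: "'v::ordered_real_vector"
  assumes "0 \<le> b" "a \<le> r *\<^sub>R b + s *\<^sub>R a" "s < 1" "r / (1 - s) \<le> c"
  shows "a \<le> c *\<^sub>R b"
proof -
  have "a \<le> s *\<^sub>R a + r *\<^sub>R b" using assms(2) by (simp add: add.commute)
  hence "(1 - s) *\<^sub>R a \<le> r *\<^sub>R b" by (rule lin2)
  hence "a \<le> (1/(1-s)) *\<^sub>R (r *\<^sub>R b)" using assms(3) by (intro lin3) auto
  also have "\<dots> = (r/(1-s)) *\<^sub>R b" by simp
  also have "\<dots> \<le> c *\<^sub>R b" using assms by (intro scaleR_right_mono) auto
  finally show ?thesis .
qed

lemma contr:
  fixes v :: "'v::ordered_real_vector"
  assumes "0 \<le> v" "v \<le> c *\<^sub>R v" "c < 1"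
  shows "v = 0"
proof -
  have "v \<le> 0 *\<^sub>R v" using lin[of v v 0 c 0] assms by simp
  thus ?thesis using assms(1) by simp
qed

lemma inf_lb:
  fixes v :: "'v::{ordered_real_vector,lattice}"
  assumes "decr_to_zero \<mu>" "\<And>n. c *\<^sub>R v \<le> \<mu> n" "c > 0"
  shows "v \<le> 0"
proof -
  have "c *\<^sub>R v \<le> 0" using assms(1,2) unfolding decr_to_zero_def is_inf_of_def by auto
  hence "v \<le> (1/c) *\<^sub>R 0" using assms(3) by (intro lin3) auto
  thus ?thesis by simp
qed

context
  fixes S :: "'a \<Rightarrow> 'a \<Rightarrow> 'a \<Rightarrow> 'v::{ordered_real_vector, lattice}"
  assumes Smet: "vector_S_metric S"
begin

lemma S_nonneg: "0 \<le> S x y z" using Smet unfolding vector_S_metric_def by auto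
lemma S_self[simp]: "S x x x = 0" using Smet unfolding vector_S_metric_def by auto
lemma S_zero: "S x x y = 0 \<longleftrightarrow> x = y" using Smet unfolding vector_S_metric_def by auto
lemma S_tri: "S x x y \<le> 2 *\<^sub>R S x x a + S y y a"
proof -
  have "S x x y \<le> S x x a + S x x a + S y y a" using Smet unfolding vector_S_metric_def by blast
  thus ?thesis by (simp add: scaleR_2)
qed
lemma S_sym: "S x x y = S y y x"
proof -
  have "S x x y \<le> S y y x" using S_tri[of x y x] by simp
  moreover have "S y y x \<le> S x x y" using S_tri[of y x y] by simp
  ultimately show ?thesis by simp
qed
end

theorem theorem2p4:
  fixes S :: "'a \<Rightarrow> 'a \<Rightarrow> 'a \<Rightarrow> 'v::{ordered_real_vector, lattice}"
    and K f :: "'a \<Rightarrow> 'a"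
  assumes arch: "archimedean_vl TYPE('v)"
    and Smet: "vector_S_metric S"
    and compl: "V_complete_on S UNIV"
    and Kcont: "V_continuous S (K \<circ> K)"
    and comm: "f \<circ> K = K \<circ> f"
    and i: "(f \<circ> K) ` UNIV \<subseteq> (K \<circ> K) ` UNIV"
    and ii: "\<exists>q::real. 0 \<le> q \<and> q < 1/3 \<and>
              (\<forall>x y. \<exists>U \<in> {S (K x) (K x) (K y), S (K x) (K x) (f x), S (K y) (K y) (f y),
                               (1/3) *\<^sub>R (S (K x) (K x) (f y) + S (K y) (K y) (f x))}.
                  S (f x) (f x) (f y) \<le> q *\<^sub>R U)"
    and iii: "V_complete_on S (K ` UNIV) \<or> V_complete_on S (f ` UNIV)"
  shows "\<exists>!z. K z = z \<and> f z = z"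
proof -
  note Sn = S_nonneg[OF Smet] and Sz = S_zero[OF Smet] and St = S_tri[OF Smet]
    and Ss = S_sym[OF Smet] and S0 = S_self[OF Smet]
  obtain q where q0: "0 \<le> q" and q1: "q < 1/3" and qc: "\<forall>x y. \<exists>U \<in> {S (K x) (K x) (K y), S (K x) (K x) (f x), S (K y) (K y) (f y),
                               (1/3) *\<^sub>R (S (K x) (K x) (f y) + S (K y) (K y) (f x))}.
                  S (f x) (f x) (f y) \<le> q *\<^sub>R U" using ii by blast
  have fK: "\<And>a. f (K a) = K (f a)" using comm by (metis comp_apply)
  have fix_coinc: "K (f a) = f a \<and> f (f a) = f a" if h: "f a = K a" for a
  proof -
    define t where "t = f a"
    have Kt: "K t = f t" unfolding t_def using fK h by metis
    obtain U where U: "U \<in> {S (K t) (K t) (K a), S (K t) (K t) (f t), S (K a) (K a) (f a),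
                               (1/3) *\<^sub>R (S (K t) (K t) (f a) + S (K a) (K a) (f t))}"
      and le: "S (f t) (f t) (f a) \<le> q *\<^sub>R U" using qc by blast
    define v where "v = S (f t) (f t) (f a)"
    have "\<exists>c<1. v \<le> c *\<^sub>R v"
    proof -
      { assume "U = S (K t) (K t) (K a)"
        hence "v \<le> q *\<^sub>R v" using le Kt h unfolding v_def by simp
        hence ?thesis using q1 by (intro exI[of _ q]) auto }
      moreover
      { assume "U = S (K t) (K t) (f t) \<or> U = S (K a) (K a) (f a)"
        hence "v \<le> 0 *\<^sub>R v" using le Kt h S0 unfolding v_def by auto
        hence ?thesis by (intro exI[of _ 0]) auto }
      moreover
      { assume "U = (1/3) *\<^sub>R (S (K t) (K t) (f a) + S (K a) (K a) (f t))"
        hence "U = (1/3) *\<^sub>R (v + v)" using Kt h Ss unfolding v_def by metis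
        hence "v \<le> (q * (2/3)) *\<^sub>R v" using le unfolding v_def
          by (simp add: scaleR_2[symmetric])
        hence ?thesis using q1 by (intro exI[of _ "q*(2/3)"]) auto }
      ultimately show ?thesis using U by blast
    qed
    then obtain c where "c < 1" "v \<le> c *\<^sub>R v" by blast
    hence "v = 0" using contr[of v c] Sn unfolding v_def by auto
    hence "f t = t" using Sz unfolding v_def t_def by auto
    thus ?thesis using Kt t_def by simp
  qed
  have uniq: "z = w" if "K z = z" "f z = z" "K w = w" "f w = w" for z w
  proof -
    obtain U where U: "U \<in> {S (K z) (K z) (K w), S (K z) (K z) (f z), S (K w) (K w) (f w),
                               (1/3) *\<^sub>R (S (K z) (K z) (f w) + S (K w) (K w) (f z))}"
      and le: "S (f z) (f z) (f w) \<le> q *\<^sub>R U" using qc by blast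
    define v where "v = S z z w"
    have "\<exists>c<1. v \<le> c *\<^sub>R v"
    proof -
      { assume "U = S (K z) (K z) (K w)"
        hence "v \<le> q *\<^sub>R v" using le that unfolding v_def by simp
        hence ?thesis using q1 by (intro exI[of _ q]) auto }
      moreover
      { assume "U = S (K z) (K z) (f z) \<or> U = S (K w) (K w) (f w)"
        hence "v \<le> 0 *\<^sub>R v" using le that S0 unfolding v_def by auto
        hence ?thesis by (intro exI[of _ 0]) auto }
      moreover
      { assume "U = (1/3) *\<^sub>R (S (K z) (K z) (f w) + S (K w) (K w) (f z))"
        hence "U = (1/3) *\<^sub>R (v + v)" using that Ss unfolding v_def by metis
        hence "v \<le> (q * (2/3)) *\<^sub>R v" using le that unfolding v_def
          by (simp add: scaleR_2[symmetric])
        hence ?thesis using q1 by (intro exI[of _ "q*(2/3)"]) auto }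
      ultimately show ?thesis using U by blast
    qed
    then obtain c where "c < 1" "v \<le> c *\<^sub>R v" by blast
    hence "v = 0" using contr[of v c] Sn unfolding v_def by auto
    thus ?thesis using Sz unfolding v_def by auto
  qed
  have "\<forall>a. \<exists>b. f (K a) = K (K b)" using i by (metis comp_apply image_iff rangeI subsetD)
  then obtain g where g: "\<And>a. f (K a) = K (K (g a))" by metis
  define xs where "xs n = (g ^^ n) undefined" for n
  define w where "w n = K (xs n)" for n
  define y where "y n = f (w n)" for n
  have yK: "y n = K (w (Suc n))" for n by (simp add: y_def w_def xs_def g)
  define d where "d n = S (y n) (y n) (y (Suc n))" for n
  have d0: "0 \<le> d n" for n unfolding d_def by (rule Sn)
  have dstep: "d (Suc n) \<le> q *\<^sub>R d n" for n
  proof -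
    obtain U where U: "U \<in> {S (K (w (Suc n))) (K (w (Suc n))) (K (w (Suc (Suc n)))),
        S (K (w (Suc n))) (K (w (Suc n))) (f (w (Suc n))),
        S (K (w (Suc (Suc n)))) (K (w (Suc (Suc n)))) (f (w (Suc (Suc n)))),
        (1/3) *\<^sub>R (S (K (w (Suc n))) (K (w (Suc n))) (f (w (Suc (Suc n)))) + S (K (w (Suc (Suc n)))) (K (w (Suc (Suc n)))) (f (w (Suc n))))}"
      and le: "S (f (w (Suc n))) (f (w (Suc n))) (f (w (Suc (Suc n)))) \<le> q *\<^sub>R U" using qc by blast
    have U': "U \<in> {d n, d (Suc n), (1/3) *\<^sub>R (S (y n) (y n) (y (Suc (Suc n))))}"
      using U unfolding d_def yK[symmetric] y_def[symmetric] by (auto simp: S0)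
    have le': "d (Suc n) \<le> q *\<^sub>R U" using le unfolding d_def y_def .
    { assume "U = d n"
      hence "d (Suc n) \<le> q *\<^sub>R d n + 0 *\<^sub>R d (Suc n)" using le' by simp
      hence ?thesis by (rule lin[OF d0]) (use q1 in auto) }
    moreover
    { assume "U = d (Suc n)"
      hence "d (Suc n) \<le> 0 *\<^sub>R d n + q *\<^sub>R d (Suc n)" using le' by simp
      hence ?thesis by (rule lin[OF d0]) (use q1 q0 in auto) }
    moreover
    { assume u: "U = (1/3) *\<^sub>R (S (y n) (y n) (y (Suc (Suc n))))"
      have "S (y n) (y n) (y (Suc (Suc n))) \<le> 2 *\<^sub>R d n + d (Suc n)"
        using St[of "y n" "y (Suc (Suc n))" "y (Suc n)"] Ss unfolding d_def by metis
      hence "q *\<^sub>R U \<le> q *\<^sub>R ((1/3) *\<^sub>R (2 *\<^sub>R d n + d (Suc n)))"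
        unfolding u using q0 by (intro scaleR_left_mono) auto
      also have "\<dots> = (2*q/3) *\<^sub>R d n + (q/3) *\<^sub>R d (Suc n)"
        by (simp add: algebra_simps)
      finally have "d (Suc n) \<le> (2*q/3) *\<^sub>R d n + (q/3) *\<^sub>R d (Suc n)" using le' by simp
      moreover have "(2*q/3) / (1 - q/3) \<le> q"
      proof -
        have "q*q \<le> q*1" using q0 q1 by (intro mult_left_mono) auto
        hence "2*q \<le> q*(3-q)" by (simp add: algebra_simps)
        hence "2*q/(3-q) \<le> q" using q1 by (simp add: divide_simps)
        moreover have "(2*q/3) / (1 - q/3) = 2*q/(3-q)" by (simp add: field_simps)
        ultimately show ?thesis by simp
      qed
      ultimately have ?thesis using lin[OF d0, where r="2*q/3" and s="q/3" and c=q] q1 by auto }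
    ultimately show ?thesis using U' by blast
  qed
  have dpow: "d n \<le> q ^ n *\<^sub>R d 0" for n
  proof (induction n)
    case 0 then show ?case by simp
  next
    case (Suc n)
    have "d (Suc n) \<le> q *\<^sub>R d n" by (rule dstep)
    also have "\<dots> \<le> q *\<^sub>R (q ^ n *\<^sub>R d 0)" using Suc q0 by (intro scaleR_left_mono) auto
    finally show ?case by simp
  qed
  have cauchy_sum: "S (y n) (y n) (y (n + m)) \<le> 2 *\<^sub>R (\<Sum>k<m. d (n + k))" for m n
  proof (induction m arbitrary: n)
    case 0 then show ?case by (simp add: S0)
  next
    case (Suc m)
    have "S (y n) (y n) (y (n + Suc m)) \<le> 2 *\<^sub>R d n + S (y (n + Suc m)) (y (n + Suc m)) (y (Suc n))"
      using St unfolding d_def by blast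
    also have "S (y (n + Suc m)) (y (n + Suc m)) (y (Suc n)) = S (y (Suc n)) (y (Suc n)) (y (Suc n + m))"
      using Ss by simp
    also have "\<dots> \<le> 2 *\<^sub>R (\<Sum>k<m. d (Suc n + k))" by (rule Suc.IH)
    finally have "S (y n) (y n) (y (n + Suc m)) \<le> 2 *\<^sub>R d n + 2 *\<^sub>R (\<Sum>k<m. d (Suc n + k))"
      by simp
    also have "\<dots> = 2 *\<^sub>R (\<Sum>k<Suc m. d (n + k))"
      by (simp only: sum.lessThan_Suc_shift scaleR_right_distrib add_0_right add_Suc_right add_Suc)
    finally show ?case .
  qed
  have geo: "(\<Sum>k<m. q ^ (n + k)) \<le> 2 * q ^ n" for m n
  proof -
    have "(\<Sum>k<m. q ^ k) = (q ^ m - 1) / (q - 1)" using q1 by (intro geometric_sum) auto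
    also have "\<dots> = (1 - q ^ m) / (1 - q)" by (metis minus_divide_divide minus_diff_eq)
    also have "\<dots> \<le> 1 / (1 - q)" using q0 q1 by (intro divide_right_mono) auto
    also have "\<dots> \<le> 2" using q1 by (simp add: divide_simps)
    finally have "(\<Sum>k<m. q ^ k) \<le> 2" .
    hence "q ^ n * (\<Sum>k<m. q ^ k) \<le> q ^ n * 2" using q0 by (intro mult_left_mono) auto
    thus ?thesis by (simp add: power_add sum_distrib_left mult.commute)
  qed
  define \<mu> where "\<mu> n = (4 * q ^ n) *\<^sub>R d 0" for n
  have ybound: "S (y n) (y n) (y (n + m)) \<le> \<mu> n" for n m
  proof -
    have "(\<Sum>k<m. d (n + k)) \<le> (\<Sum>k<m. q ^ (n + k) *\<^sub>R d 0)" by (intro sum_mono dpow)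
    also have "\<dots> = (\<Sum>k<m. q ^ (n + k)) *\<^sub>R d 0" by (simp add: scaleR_sum_left)
    also have "\<dots> \<le> (2 * q ^ n) *\<^sub>R d 0" using geo d0 by (intro scaleR_right_mono) auto
    finally have "2 *\<^sub>R (\<Sum>k<m. d (n + k)) \<le> 2 *\<^sub>R ((2 * q ^ n) *\<^sub>R d 0)"
      by (intro scaleR_left_mono) auto
    thus ?thesis using cauchy_sum[of n m] unfolding \<mu>_def by simp
  qed
  have qpow: "q ^ m \<le> 1 / real m" if "m \<ge> 1" for m
  proof -
    have "q ^ m \<le> (1/3) ^ m" using q0 q1 by (intro power_mono) auto
    also have "\<dots> = 1 / 3 ^ m" by (simp add: power_divide)
    also have "\<dots> \<le> 1 / real m"
    proof -
      have "real m < 2 ^ m" using less_exp[of m] by (metis of_nat_less_iff of_nat_numeral of_nat_power)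
      also have "(2::real) ^ m \<le> 3 ^ m" by (intro power_mono) auto
      finally show ?thesis using that by (simp add: divide_simps)
    qed
    finally show ?thesis .
  qed
  have mu_decr: "decr_to_zero \<mu>"
    unfolding decr_to_zero_def is_inf_of_def
  proof (intro conjI allI ballI impI)
    fix n
    have "4 * q ^ Suc n \<le> 4 * q ^ n" using q0 q1 by (simp add: power_decreasing mult_left_le_one_le)
    thus "\<mu> (Suc n) \<le> \<mu> n" unfolding \<mu>_def using d0 by (intro scaleR_right_mono) auto
  next
    fix x assume "x \<in> range \<mu>"
    thus "0 \<le> x" unfolding \<mu>_def using d0 q0 by (auto intro!: scaleR_nonneg_nonneg)
  next
    fix b assume b: "\<forall>x\<in>range \<mu>. b \<le> x"
    define v where "v = 4 *\<^sub>R d 0"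
    have v0: "0 \<le> v" unfolding v_def using d0 by (intro scaleR_nonneg_nonneg) auto
    have inf: "is_inf_of {(1 / real m) *\<^sub>R v | m::nat. m \<ge> 1} 0"
      using arch v0 unfolding archimedean_vl_def by blast
    have "\<forall>x\<in>{(1 / real m) *\<^sub>R v | m::nat. m \<ge> 1}. b \<le> x"
    proof
      fix x assume "x \<in> {(1 / real m) *\<^sub>R v | m::nat. m \<ge> 1}"
      then obtain m where m: "m \<ge> 1" "x = (1 / real m) *\<^sub>R v" by blast
      have "b \<le> \<mu> m" using b by auto
      also have "\<mu> m = q ^ m *\<^sub>R v" unfolding \<mu>_def v_def by (simp add: mult.commute)
      also have "\<dots> \<le> x" unfolding m(2) using qpow[OF m(1)] v0 by (intro scaleR_right_mono)
      finally show "b \<le> x" .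
    qed
    thus "b \<le> 0" using inf unfolding is_inf_of_def by blast
  qed
  have "V_Cauchy S y" unfolding V_Cauchy_def using mu_decr ybound by blast
  then obtain z where zc: "V_conv S y z" using compl unfolding V_complete_on_def by blast
  hence "V_conv S (\<lambda>n. (K \<circ> K) (y n)) ((K \<circ> K) z)" using Kcont unfolding V_continuous_def by blast
  then obtain \<mu>' where mu': "decr_to_zero \<mu>'" and al: "\<And>n. S (K (K (y n))) (K (K (y n))) (K (K z)) \<le> \<mu>' n"
    unfolding V_conv_def by auto
  have mu'0: "0 \<le> \<mu>' n" for n using mu' unfolding decr_to_zero_def is_inf_of_def by auto
  have mu'd: "\<mu>' (Suc n) \<le> \<mu>' n" for n using mu' unfolding decr_to_zero_def by auto
  define p where "p = K z"
  define A where "A n = K (K (y n))" for n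
  define \<alpha> where "\<alpha> n = S (A n) (A n) (K p)" for n
  define D where "D = S (K p) (K p) (f p)"
  have al': "\<alpha> n \<le> \<mu>' n" for n using al unfolding \<alpha>_def A_def p_def .
  have a0: "0 \<le> \<alpha> n" for n unfolding \<alpha>_def by (rule Sn)
  have D0: "0 \<le> D" unfolding D_def by (rule Sn)
  have Dbound: "((1 - q) / 3) *\<^sub>R D \<le> \<mu>' n" for n
  proof -
    define X where "X = K (K (w (Suc n)))"
    have fX: "f X = A (Suc n)" unfolding X_def A_def y_def using fK by simp
    have KX: "K X = A n" unfolding X_def A_def yK by simp
    obtain U where U: "U \<in> {S (K X) (K X) (K p), S (K X) (K X) (f X), S (K p) (K p) (f p),
                               (1/3) *\<^sub>R (S (K X) (K X) (f p) + S (K p) (K p) (f X))}"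
      and le: "S (f X) (f X) (f p) \<le> q *\<^sub>R U" using qc by blast
    define F where "F = 2 *\<^sub>R \<alpha> n + \<alpha> (Suc n)"
    have F0: "0 \<le> F" unfolding F_def using a0 by (intro add_nonneg_nonneg scaleR_nonneg_nonneg) auto
    have aF: "\<alpha> n \<le> F" unfolding F_def using a0
      by (auto simp: scaleR_2 intro!: add_increasing add_increasing2)
    have UE: "U \<le> D + F"
    proof -
      { assume "U = S (K X) (K X) (K p)"
        hence "U = \<alpha> n" unfolding \<alpha>_def KX .
        hence ?thesis using aF D0 by (simp add: add_increasing) }
      moreover
      { assume "U = S (K X) (K X) (f X)"
        hence "U \<le> F" unfolding KX fX F_def \<alpha>_def using St by blast
        hence ?thesis using D0 by (simp add: add_increasing) }
      moreover
      { assume "U = S (K p) (K p) (f p)"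
        hence ?thesis using F0 D_def by (simp add: add_increasing2) }
      moreover
      { assume u: "U = (1/3) *\<^sub>R (S (K X) (K X) (f p) + S (K p) (K p) (f X))"
        have 1: "S (K X) (K X) (f p) \<le> 2 *\<^sub>R \<alpha> n + D"
          unfolding KX \<alpha>_def D_def using St Ss by metis
        have 2: "S (K p) (K p) (f X) = \<alpha> (Suc n)" unfolding fX \<alpha>_def using Ss by metis
        have "S (K X) (K X) (f p) + S (K p) (K p) (f X) \<le> D + F"
          unfolding 2 F_def using 1 by (simp add: algebra_simps add_right_mono)
        hence "U \<le> (1/3) *\<^sub>R (D + F)" unfolding u by (intro scaleR_left_mono) auto
        also have "\<dots> \<le> 1 *\<^sub>R (D + F)" using D0 F0 by (intro scaleR_right_mono) auto
        finally have ?thesis by simp }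
      ultimately show ?thesis using U by blast
    qed
    have "D \<le> 2 *\<^sub>R S (K p) (K p) (A (Suc n)) + S (f p) (f p) (A (Suc n))"
      unfolding D_def by (rule St)
    also have "\<dots> = 2 *\<^sub>R \<alpha> (Suc n) + S (f X) (f X) (f p)" unfolding fX \<alpha>_def using Ss by metis
    also have "\<dots> \<le> 2 *\<^sub>R \<mu>' n + q *\<^sub>R (D + F)"
    proof (rule add_mono)
      show "2 *\<^sub>R \<alpha> (Suc n) \<le> 2 *\<^sub>R \<mu>' n" using al'[of "Suc n"] mu'd[of n]
        by (intro scaleR_left_mono) auto
      show "S (f X) (f X) (f p) \<le> q *\<^sub>R (D + F)" using le UE q0 by (meson order_trans scaleR_left_mono)
    qed
    also have "\<dots> \<le> 2 *\<^sub>R \<mu>' n + q *\<^sub>R (D + 3 *\<^sub>R \<mu>' n)"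
    proof -
      have "F \<le> 2 *\<^sub>R \<mu>' n + \<mu>' n" unfolding F_def using al'[of n] al'[of "Suc n"] mu'd[of n]
        by (intro add_mono scaleR_left_mono) auto
      also have "\<dots> = 3 *\<^sub>R \<mu>' n" using scaleR_left_distrib[of 2 1 "\<mu>' n"] by simp
      finally have "D + F \<le> D + 3 *\<^sub>R \<mu>' n" by simp
      hence "q *\<^sub>R (D + F) \<le> q *\<^sub>R (D + 3 *\<^sub>R \<mu>' n)" by (rule scaleR_left_mono[OF _ q0])
      thus ?thesis by (rule add_left_mono)
    qed
    also have "\<dots> = q *\<^sub>R D + (2 + 3 * q) *\<^sub>R \<mu>' n" by (simp add: algebra_simps)
    finally have "(1 - q) *\<^sub>R D \<le> (2 + 3 * q) *\<^sub>R \<mu>' n" by (rule lin2)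
    also have "\<dots> \<le> 3 *\<^sub>R \<mu>' n" using q1 mu'0 by (intro scaleR_right_mono) auto
    finally have "(1/3) *\<^sub>R ((1 - q) *\<^sub>R D) \<le> (1/3) *\<^sub>R (3 *\<^sub>R \<mu>' n)"
      by (intro scaleR_left_mono) auto
    thus ?thesis by simp
  qed
  have "D \<le> 0" using inf_lb[OF mu' Dbound] q1 by simp
  hence "D = 0" using D0 by simp
  hence coinc: "f p = K p" using Sz unfolding D_def by metis
  have ex: "K (f p) = f p \<and> f (f p) = f p" by (rule fix_coinc[OF coinc])
  show ?thesis using ex uniq by blast
qed
end
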